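(* Let $\gamma>-1/2$. For every $a\in\mathbb{C}$ with $\operatorname{Im}(a)\neq0$, \[ (2\gamma+1)\frac{|{}_1F_1(\gamma;2\gamma+1;ia)|^2-|{}_1F_1(1+\gamma;2\gamma+1;ia)|^2}{2\operatorname{Im}(a)}>0, \] and for every $a\in\mathbb{R}$, $T(a)>0$, where \[ T(a)={}_1F_1(1+\gamma;2\gamma+1;-ia)\,{}_1F_1(2+\gamma;2\gamma+2;ia)(1+\gamma)-{}_1F_1(\gamma;2\gamma+1;-ia)\,{}_1F_1(1+\gamma;2\gamma+2;ia)\,\gamma . \]
   Context: ${}_1F_1(\alpha;\beta;z)=\sum_{k\ge0}\frac{(\alpha)_k}{(\beta)_k}\frac{z^k}{k!}$ is the confluent hypergeometric function, with $(v)_k$ the rising factorial. (For real $a$ the paper interprets the displayed quotient as $T(a)$.) *)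

theory Defs
  imports "HOL-Analysis.Analysis"
begin

definition hyp1F1 :: "complex \<Rightarrow> complex \<Rightarrow> complex \<Rightarrow> complex" where
  "hyp1F1 \<alpha> \<beta> z = (\<Sum>k. pochhammer \<alpha> k / pochhammer \<beta> k * z ^ k / of_nat (fact k))"

definition T_fun :: "real \<Rightarrow> real \<Rightarrow> complex" where
  "T_fun \<gamma> a =
     hyp1F1 (1 + of_real \<gamma>) (2 * of_real \<gamma> + 1) (- \<i> * of_real a)
       * hyp1F1 (2 + of_real \<gamma>) (2 * of_real \<gamma> + 2) (\<i> * of_real a) * (1 + of_real \<gamma>)
   - hyp1F1 (of_real \<gamma>) (2 * of_real \<gamma> + 1) (- \<i> * of_real a)
       * hyp1F1 (1 + of_real \<gamma>) (2 * of_real \<gamma> + 2) (\<i> * of_real a) * of_real \<gamma>"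

end

theory Submission
  imports Defs
begin


definition cf :: "complex \<Rightarrow> complex \<Rightarrow> nat \<Rightarrow> complex" where
  "cf \<alpha> \<beta> k = pochhammer \<alpha> k / pochhammer \<beta> k / of_nat (fact k)"

lemma hyp_eq: "hyp1F1 \<alpha> \<beta> z = (\<Sum>k. cf \<alpha> \<beta> k * z^k)"
  unfolding hyp1F1_def cf_def by (simp add: field_simps)

lemma cf_Suc:
  assumes "b > 0"
  shows "cf \<alpha> (of_real b) (Suc n) = cf \<alpha> (of_real b) n * ((\<alpha> + of_nat n) / ((of_real b + of_nat n) * of_nat (Suc n)))"
proof -
  have "pochhammer (of_real b) n \<noteq> (0::complex)"
    using assms by (simp add: pochhammer_of_real pochhammer_eq_0_iff)
  moreover have "(of_real b + of_nat n :: complex) \<noteq> 0"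
    using assms by (metis add_pos_nonneg of_nat_0_le_iff of_real_add of_real_eq_0_iff of_real_of_nat_eq order_less_irrefl)
  ultimately show ?thesis unfolding cf_def
    by (simp add: pochhammer_rec' field_simps)
qed

lemma cf_summable:
  assumes "b > 0"
  shows "summable (\<lambda>k. cf \<alpha> (of_real b) k * z^k)"
proof -
  define C where "C = norm \<alpha> / b + 1"
  define N where "N = nat \<lceil>2 * C * norm z\<rceil>"
  show ?thesis
  proof (rule summable_ratio_test[where c="1/2" and N=N])
    fix n assume nN: "n \<ge> N"
    have Cpos: "C > 0" unfolding C_def using assms by (simp add: add_nonneg_pos)
    have nb: "norm (of_real b + of_nat n :: complex) = b + n"
      using assms by (metis add_nonneg_nonneg less_imp_le norm_of_real of_nat_0_le_iff of_real_add of_real_of_nat_eq real_norm_def abs_of_nonneg)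
    have na: "norm (\<alpha> + of_nat n) \<le> C * (b + n)"
    proof -
      have "norm (\<alpha> + of_nat n) \<le> norm \<alpha> + n" by (metis norm_of_nat norm_triangle_ineq)
      also have "\<dots> \<le> C * (b+n)" unfolding C_def using assms
        by (simp add: field_simps)
      finally show ?thesis .
    qed
    have "real n + 1 \<ge> 2 * C * norm z" using nN unfolding N_def by linarith
    have r: "norm ((\<alpha> + of_nat n) / ((of_real b + of_nat n) * of_nat (Suc n))) * norm z \<le> 1/2"
    proof -
      have "norm ((\<alpha> + of_nat n) / ((of_real b + of_nat n) * of_nat (Suc n))) * norm z
          = norm (\<alpha> + of_nat n) * norm z / ((b + n) * (n+1))"
        using norm_of_nat[of "Suc n", where 'a=complex] by (simp add: norm_divide norm_mult nb)
      also have "\<dots> \<le> C * (b+n) * norm z / ((b + n) * (n+1))"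
        using na assms by (intro divide_right_mono mult_right_mono) auto
      also have "\<dots> = C * norm z / (n+1)"
      proof -
        have bn: "b + real n \<noteq> 0" using assms by linarith
        show ?thesis using bn by (simp add: divide_simps)
      qed
      also have "\<dots> \<le> 1/2" using \<open>real n + 1 \<ge> 2 * C * norm z\<close> by (simp add: field_simps)
      finally show ?thesis .
    qed
    have "norm (cf \<alpha> (of_real b) (Suc n) * z ^ Suc n) = norm (cf \<alpha> (of_real b) n * z ^ n) *
      (norm ((\<alpha> + of_nat n) / ((of_real b + of_nat n) * of_nat (Suc n))) * norm z)"
      unfolding cf_Suc[OF assms] norm_mult norm_power power_Suc by (simp add: norm_mult)
    also have "\<dots> \<le> norm (cf \<alpha> (of_real b) n * z ^ n) * (1/2)"
      by (intro mult_left_mono r) auto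
    finally show "norm (cf \<alpha> (of_real b) (Suc n) * z ^ Suc n) \<le> 1/2 * norm (cf \<alpha> (of_real b) n * z ^ n)" by simp
  qed simp
qed

lemma poch_nz: "b > 0 \<Longrightarrow> pochhammer (of_real b :: complex) n \<noteq> 0"
  by (simp add: pochhammer_of_real pochhammer_eq_0_iff)

lemma bn_nz: "b > 0 \<Longrightarrow> (of_real b + of_nat n :: complex) \<noteq> 0"
  by (metis add_pos_nonneg of_nat_0_le_iff of_real_add of_real_eq_0_iff of_real_of_nat_eq order_less_irrefl)

lemma aux_cancel: "(s::complex) \<noteq> 0 \<Longrightarrow> s * (x / (s * f)) = x / f"
  by (cases "f = 0") (simp_all add: field_simps)

lemma diffs_cf:
  assumes "b > 0"
  shows "diffs (cf \<alpha> (of_real b)) n = \<alpha> / of_real b * cf (\<alpha> + 1) (of_real b + 1) n"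
proof -
  have s: "(of_nat (Suc n) :: complex) \<noteq> 0"
      by (metis of_nat_eq_0_iff Zero_not_Suc)
  have "diffs (cf \<alpha> (of_real b)) n = of_nat (Suc n) * ((\<alpha> * pochhammer (\<alpha>+1) n) / (of_real b * pochhammer (of_real b + 1) n)
      / (of_nat (Suc n) * of_nat (fact n)))"
    unfolding diffs_def cf_def by (simp only: pochhammer_rec fact_Suc of_nat_mult of_nat_id)
  also have "\<dots> = (\<alpha> * pochhammer (\<alpha>+1) n) / (of_real b * pochhammer (of_real b + 1) n) / of_nat (fact n)"
    using s by (rule aux_cancel)
  also have "\<dots> = \<alpha> / of_real b * cf (\<alpha> + 1) (of_real b + 1) n"
    unfolding cf_def by (simp only: times_divide_times_eq divide_divide_eq_left mult.assoc)
  finally show ?thesis .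
qed

lemma hyp_deriv:
  assumes "b > 0"
  shows "(hyp1F1 \<alpha> (of_real b) has_field_derivative
           (\<alpha> / of_real b * hyp1F1 (\<alpha> + 1) (of_real b + 1) z)) (at z)"
proof -
  have s1: "summable (\<lambda>k. cf (\<alpha>+1) (of_real b + 1) k * z^k)"
    using cf_summable[of "b+1" "\<alpha>+1" z] assms by simp
  have "(\<Sum>n. diffs (cf \<alpha> (of_real b)) n * z^n) = (\<Sum>n. \<alpha> / of_real b * (cf (\<alpha> + 1) (of_real b + 1) n * z^n))"
    by (simp add: diffs_cf[OF assms] mult.assoc)
  also have "\<dots> = \<alpha> / of_real b * hyp1F1 (\<alpha> + 1) (of_real b + 1) z"
    by (subst suminf_mult[OF s1]) (simp add: hyp_eq)
  finally have e: "(\<Sum>n. diffs (cf \<alpha> (of_real b)) n * z^n) = \<alpha> / of_real b * hyp1F1 (\<alpha> + 1) (of_real b + 1) z" .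
  have "hyp1F1 \<alpha> (of_real b) = (\<lambda>x. \<Sum>n. cf \<alpha> (of_real b) n * x^n)"
    by (simp add: hyp_eq fun_eq_iff)
  then show ?thesis
    using termdiffs_strong_converges_everywhere[of "cf \<alpha> (of_real b)" z] cf_summable[OF assms] e
    by simp
qed

lemma hyp_zero: "hyp1F1 \<alpha> \<beta> 0 = 1"
  unfolding hyp_eq powser_zero by (simp add: cf_def)

lemma hyp_cnj:
  assumes "b > 0"
  shows "cnj (hyp1F1 (of_real r) (of_real b) z) = hyp1F1 (of_real r) (of_real b) (cnj z)"
proof -
  have c: "cnj (cf (of_real r) (of_real b) k) = cf (of_real r) (of_real b) k" for k
    unfolding cf_def pochhammer_of_real
    by (metis complex_cnj_divide complex_cnj_of_nat complex_cnj_complex_of_real)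
  have "(\<lambda>k. cf (of_real r) (of_real b) k * z^k) sums hyp1F1 (of_real r) (of_real b) z"
    using summable_sums[OF cf_summable[OF assms]] by (simp add: hyp_eq)
  then have "(\<lambda>k. cnj (cf (of_real r) (of_real b) k * z^k)) sums cnj (hyp1F1 (of_real r) (of_real b) z)"
    by (subst sums_cnj)
  then have "(\<lambda>k. cf (of_real r) (of_real b) k * cnj z^k) sums cnj (hyp1F1 (of_real r) (of_real b) z)"
    by (simp add: c)
  moreover have "(\<lambda>k. cf (of_real r) (of_real b) k * cnj z^k) sums hyp1F1 (of_real r) (of_real b) (cnj z)"
    using summable_sums[OF cf_summable[OF assms]] by (simp add: hyp_eq)
  ultimately show ?thesis by (rule sums_unique2)
qed

lemma diffs_sum:
  assumes "b > 0"
  shows "(\<lambda>n. of_nat n * cf \<alpha> (of_real b) n * z^n) sums (z * (\<alpha> / of_real b * hyp1F1 (\<alpha> + 1) (of_real b + 1) z))"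
proof -
  have s1: "summable (\<lambda>k. cf (\<alpha>+1) (of_real b + 1) k * z^k)"
    using cf_summable[of "b+1" "\<alpha>+1" z] assms by simp
  have eq: "(\<lambda>n. diffs (cf \<alpha> (of_real b)) n * z^n) = (\<lambda>n. \<alpha> / of_real b * (cf (\<alpha> + 1) (of_real b + 1) n * z^n))"
    by (simp add: diffs_cf[OF assms] mult.assoc)
  have sd: "summable (\<lambda>n. diffs (cf \<alpha> (of_real b)) n * z^n)"
    unfolding eq by (rule summable_mult[OF s1])
  have "(\<Sum>n. diffs (cf \<alpha> (of_real b)) n * z^n) = \<alpha> / of_real b * hyp1F1 (\<alpha> + 1) (of_real b + 1) z"
    unfolding eq by (subst suminf_mult[OF s1]) (simp add: hyp_eq)
  with diffs_equiv[OF sd] have "(\<lambda>n. of_nat n * cf \<alpha> (of_real b) n * z^(n - Suc 0)) sums (\<alpha> / of_real b * hyp1F1 (\<alpha> + 1) (of_real b + 1) z)"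
    by simp
  from sums_mult[OF this, of z] show ?thesis
  proof (rule back_subst[where P="\<lambda>f. f sums _"], intro ext)
    fix n show "z * (of_nat n * cf \<alpha> (of_real b) n * z ^ (n - Suc 0)) = of_nat n * cf \<alpha> (of_real b) n * z^n"
      by (cases n) auto
  qed
qed

lemma hyp_sums: "b > 0 \<Longrightarrow> (\<lambda>n. cf \<alpha> (of_real b) n * z^n) sums hyp1F1 \<alpha> (of_real b) z"
  using summable_sums[OF cf_summable] by (simp add: hyp_eq)

lemma C1: "of_nat n * cf g B n = g * (cf (g+1) B n - cf g B n)"
proof -
  have "of_nat n * pochhammer g n = g * (pochhammer (g+1) n - pochhammer g n)"
    using pochhammer_rec[of g n] pochhammer_rec'[of g n] by (simp add: algebra_simps)
  then show ?thesis unfolding cf_def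
    by (simp add: divide_simps)
qed

lemma C2_alg:
  fixes P Q R B g m m1 :: complex
  assumes "Q \<noteq> 0" "R \<noteq> 0" "B + m \<noteq> 0" "m1 = m + 1" "m1 \<noteq> 0" "B = 2*g+1"
  shows "m1 * ((g+1+m)*P / ((B+m)*Q) / (m1*R)) = g*((g*P)/((B+m)*Q)/(m1*R) - (g+1+m)*P/((B+m)*Q)/(m1*R)) + P/Q/R"
proof -
  have h1: "2*g+1+m \<noteq> 0" "m + 1 \<noteq> 0" using assms by auto
  have h2: "(2*g+1+m) * Q \<noteq> 0" "(m+1) * R \<noteq> 0" "Q * R \<noteq> 0"
    using h1 assms(1,2) by auto
  show ?thesis unfolding assms(4) assms(6) divide_divide_eq_left using h1 h2 assms(1,2)
    by (simp add: divide_simps) (simp add: algebra_simps)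
qed

lemma C2:
  assumes "b > 0" "of_real b = 2*g+1"
  shows "of_nat (Suc m) * cf (g+1) (of_real b) (Suc m) = g * (cf g (of_real b) (Suc m) - cf (g+1) (of_real b) (Suc m)) + cf (g+1) (of_real b) m"
proof -
  have e1: "pochhammer (g+1) (Suc m) = (g + 1 + of_nat m) * pochhammer (g+1) m" by (simp add: pochhammer_rec')
  have e2: "pochhammer g (Suc m) = g * pochhammer (g+1) m" by (simp add: pochhammer_rec)
  have e3: "pochhammer (of_real b) (Suc m) = (of_real b + of_nat m) * pochhammer (of_real b) m" by (simp add: pochhammer_rec')
  have e4: "(of_nat (fact (Suc m)) :: complex) = of_nat (Suc m) * of_nat (fact m)" by (simp only: fact_Suc of_nat_mult of_nat_id)
  have "of_nat (Suc m) \<noteq> (0::complex)" by (metis of_nat_eq_0_iff Zero_not_Suc)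
  from C2_alg[OF poch_nz[OF assms(1)] _ bn_nz[OF assms(1)] _ this assms(2), of "of_nat (fact m)" m "pochhammer (g+1) m"]
  show ?thesis unfolding cf_def e1 e2 e3 e4 by simp
qed

lemma E1:
  assumes "b > 0"
  shows "z * (\<alpha> / of_real b * hyp1F1 (\<alpha>+1) (of_real b + 1) z)
       = \<alpha> * (hyp1F1 (\<alpha>+1) (of_real b) z - hyp1F1 \<alpha> (of_real b) z)"
proof -
  have A: "(\<lambda>n. of_nat n * cf \<alpha> (of_real b) n * z^n) sums (z * (\<alpha> / of_real b * hyp1F1 (\<alpha> + 1) (of_real b + 1) z))"
    by (rule diffs_sum[OF assms])
  have B: "(\<lambda>n. \<alpha> * (cf (\<alpha>+1) (of_real b) n * z^n - cf \<alpha> (of_real b) n * z^n)) sums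
     (\<alpha> * (hyp1F1 (\<alpha>+1) (of_real b) z - hyp1F1 \<alpha> (of_real b) z))"
    by (intro sums_mult sums_diff hyp_sums assms)
  have "(\<lambda>n. of_nat n * cf \<alpha> (of_real b) n * z^n) = (\<lambda>n. \<alpha> * (cf (\<alpha>+1) (of_real b) n * z^n - cf \<alpha> (of_real b) n * z^n))"
    by (rule ext) (simp add: C1 algebra_simps)
  with A B show ?thesis by (metis sums_unique2)
qed

lemma E2:
  assumes "b > 0" "of_real b = 2*\<alpha>+1"
  shows "z * ((\<alpha>+1) / of_real b * hyp1F1 (\<alpha>+1+1) (of_real b + 1) z)
       = \<alpha> * (hyp1F1 \<alpha> (of_real b) z - hyp1F1 (\<alpha>+1) (of_real b) z) + z * hyp1F1 (\<alpha>+1) (of_real b) z"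
proof -
  let ?g = "cf (\<alpha>+1) (of_real b)" and ?f = "cf \<alpha> (of_real b)"
  have A: "(\<lambda>n. of_nat n * ?g n * z^n) sums (z * ((\<alpha>+1) / of_real b * hyp1F1 (\<alpha> + 1 + 1) (of_real b + 1) z))"
    by (rule diffs_sum[OF assms(1)])
  define h where "h n = (case n of 0 \<Rightarrow> 0 | Suc m \<Rightarrow> ?g m * z^(Suc m))" for n
  have hs: "(\<lambda>n. h (Suc n)) = (\<lambda>n. z * (?g n * z^n))" by (simp add: h_def fun_eq_iff algebra_simps)
  have "(\<lambda>n. h (Suc n)) sums (z * hyp1F1 (\<alpha>+1) (of_real b) z)"
    unfolding hs by (rule sums_mult[OF hyp_sums[OF assms(1)]])
  then have H: "h sums (z * hyp1F1 (\<alpha>+1) (of_real b) z)"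
    using sums_Suc_iff[of h] by (simp add: h_def)
  have B: "(\<lambda>n. \<alpha> * (?f n * z^n - ?g n * z^n) + h n) sums
     (\<alpha> * (hyp1F1 \<alpha> (of_real b) z - hyp1F1 (\<alpha>+1) (of_real b) z) + z * hyp1F1 (\<alpha>+1) (of_real b) z)"
    by (intro sums_add H sums_mult sums_diff hyp_sums assms)
  have "(\<lambda>n. of_nat n * ?g n * z^n) = (\<lambda>n. \<alpha> * (?f n * z^n - ?g n * z^n) + h n)"
  proof (rule ext)
    fix n show "of_nat n * ?g n * z^n = \<alpha> * (?f n * z^n - ?g n * z^n) + h n"
    proof (cases n)
      case 0 then show ?thesis by (simp add: h_def cf_def)
    next
      case (Suc m)
      have "of_nat (Suc m) * ?g (Suc m) = \<alpha> * (?f (Suc m) - ?g (Suc m)) + ?g m"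
        by (rule C2[OF assms])
      then have "of_nat (Suc m) * ?g (Suc m) * z^(Suc m) = (\<alpha> * (?f (Suc m) - ?g (Suc m)) + ?g m) * z^(Suc m)"
        by simp
      then show ?thesis using Suc by (simp add: h_def algebra_simps)
    qed
  qed
  with A B show ?thesis by (metis sums_unique2)
qed



lemma mono_step:
  assumes der: "\<And>t. 0 < t \<Longrightarrow> t \<le> 1 \<Longrightarrow> (Q has_real_derivative Q' t) (at t)"
    and nn: "\<And>t. 0 < t \<Longrightarrow> t \<le> 1 \<Longrightarrow> Q' t \<ge> 0"
    and r: "0 < r" "r \<le> s" "s \<le> 1"
  shows "Q r \<le> Q s"
proof (cases "r = s")
  case False
  then have "r < s" using r by simp
  from MVT2[OF this, of Q Q'] der r obtain \<xi> where "r < \<xi>" "\<xi> < s" "Q s - Q r = (s - r) * Q' \<xi>"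
    by force
  moreover have "Q' \<xi> \<ge> 0" using nn \<open>r < \<xi>\<close> \<open>\<xi> < s\<close> r by force
  ultimately show ?thesis using \<open>r < s\<close> by (metis diff_ge_0_iff_ge less_eq_real_def mult_nonneg_nonneg)
qed simp

lemma nonneg_from_deriv:
  assumes lim: "(Q \<longlongrightarrow> 0) (at_right 0)"
    and der: "\<And>t. 0 < t \<Longrightarrow> t \<le> 1 \<Longrightarrow> (Q has_real_derivative Q' t) (at t)"
    and nn: "\<And>t. 0 < t \<Longrightarrow> t \<le> 1 \<Longrightarrow> Q' t \<ge> 0"
    and x: "0 < x" "x \<le> 1"
  shows "Q x \<ge> 0"
proof (rule tendsto_le[OF _ tendsto_const lim])
  show "at_right (0::real) \<noteq> bot" by simp
  have "eventually (\<lambda>r. r < x) (at_right (0::real))"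
    using x by (auto simp: eventually_at_right_field)
  then show "eventually (\<lambda>r. Q r \<le> Q x) (at_right 0)"
    using eventually_at_right_less[of 0]
    by eventually_elim (use mono_step[OF der nn] x in auto)
qed

lemma pos_from_deriv:
  assumes lim: "(Q \<longlongrightarrow> 0) (at_right 0)"
    and der: "\<And>t. 0 < t \<Longrightarrow> t \<le> 1 \<Longrightarrow> (Q has_real_derivative Q' t) (at t)"
    and nn: "\<And>t. 0 < t \<Longrightarrow> t \<le> 1 \<Longrightarrow> Q' t \<ge> 0"
    and ev: "eventually (\<lambda>t. Q' t > 0) (at_right 0)"
  shows "Q 1 > 0"
proof -
  obtain e where e: "e > 0" "\<And>y. 0 < y \<Longrightarrow> y < e \<Longrightarrow> Q' y > 0"
    using ev unfolding eventually_at_right_field by auto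
  define s where "s = min (e/2) (1/2::real)"
  have s: "0 < s" "s < e" "s \<le> 1" using e unfolding s_def by auto
  from MVT2[of "s/2" s Q Q'] der s obtain \<xi> where xi: "s/2 < \<xi>" "\<xi> < s" "Q s - Q (s/2) = (s - s/2) * Q' \<xi>"
    by force
  have "Q' \<xi> > 0" using e xi s by auto
  moreover have "s - s/2 > 0" using s by simp
  ultimately have "(s - s/2) * Q' \<xi> > 0" by (rule mult_pos_pos[rotated])
  then have "Q s > Q (s/2)" using xi by linarith
  moreover have "Q (s/2) \<ge> 0" using nonneg_from_deriv[OF lim der nn] s by auto
  moreover have "Q s \<le> Q 1" using mono_step[OF der nn] s by auto
  ultimately show ?thesis by linarith
qed

lemma powr_lim:
  fixes f :: "real \<Rightarrow> real"
  assumes "f 0 = 0" "(f has_real_derivative d) (at 0)" "e > -1"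
  shows "((\<lambda>t. t powr e * f t) \<longlongrightarrow> 0) (at_right 0)"
proof -
  have "((\<lambda>h. (f (0 + h) - f 0) / h) \<longlongrightarrow> d) (at 0)"
    using assms(2) by (simp add: DERIV_def)
  then have q: "((\<lambda>h. f h / h) \<longlongrightarrow> d) (at_right 0)"
    using assms(1) tendsto_mono[OF at_within_le_at] by fastforce
  have p: "((\<lambda>t. t powr (e+1)) \<longlongrightarrow> 0) (at_right 0)"
    using assms(3) eventually_at_right_less[of 0]
    by (intro tendsto_zero_powrI) (auto intro: tendsto_ident_at elim: eventually_mono)
  have "((\<lambda>t. t powr (e+1) * (f t / t)) \<longlongrightarrow> 0 * d) (at_right 0)"
    by (intro tendsto_mult p q)
  moreover have "eventually (\<lambda>t. t powr (e+1) * (f t / t) = t powr e * f t) (at_right (0::real))"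
    using eventually_at_right_less[of 0]
    by eventually_elim (simp add: powr_add)
  ultimately show ?thesis by (simp add: tendsto_cong)
qed



locale ray =
  fixes p1 q1 p2 q2 p1' q1' p2' q2' :: "real \<Rightarrow> real" and \<gamma> x y :: real
  assumes dp1: "\<And>t. (p1 has_real_derivative p1' t) (at t)"
    and dq1: "\<And>t. (q1 has_real_derivative q1' t) (at t)"
    and dp2: "\<And>t. (p2 has_real_derivative p2' t) (at t)"
    and dq2: "\<And>t. (q2 has_real_derivative q2' t) (at t)"
    and o1: "\<And>t. t * p1' t = \<gamma> * (p2 t - p1 t)"
    and o2: "\<And>t. t * q1' t = \<gamma> * (q2 t - q1 t)"
    and o3: "\<And>t. t * p2' t = \<gamma> * (p1 t - p2 t) + t * (x * p2 t - y * q2 t)"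
    and o4: "\<And>t. t * q2' t = \<gamma> * (q1 t - q2 t) + t * (x * q2 t + y * p2 t)"
    and i1: "p1 0 = 1" and i2: "q1 0 = 0" and i3: "p2 0 = 1" and i4: "q2 0 = 0"
    and gam: "\<gamma> > -1/2"
begin

definition "D t = p2 t * p2 t + q2 t * q2 t - p1 t * p1 t - q1 t * q1 t"
definition "P t = t powr (2*\<gamma>) * D t"

lemma D_deriv: "(D has_real_derivative 2 * (p2 t * p2' t + q2 t * q2' t - p1 t * p1' t - q1 t * q1' t)) (at t)"
  unfolding D_def[abs_def]
  by (rule derivative_eq_intros dp1 dq1 dp2 dq2 refl)+ (simp add: algebra_simps)

lemma tD: "t * (2 * (p2 t * p2' t + q2 t * q2' t - p1 t * p1' t - q1 t * q1' t))
   = 2 * x * t * (p2 t * p2 t + q2 t * q2 t) - 2 * \<gamma> * D t"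
proof -
  have "t * (2 * (p2 t * p2' t + q2 t * q2' t - p1 t * p1' t - q1 t * q1' t))
     = 2 * (p2 t * (t * p2' t) + q2 t * (t * q2' t) - p1 t * (t * p1' t) - q1 t * (t * q1' t))"
    by (simp add: algebra_simps)
  also have "\<dots> = 2 * x * t * (p2 t * p2 t + q2 t * q2 t) - 2 * \<gamma> * D t"
    unfolding o1 o2 o3 o4 D_def by (simp add: algebra_simps)
  finally show ?thesis .
qed

lemma P_deriv:
  assumes "t > 0"
  shows "(P has_real_derivative 2 * x * t powr (2*\<gamma>) * (p2 t * p2 t + q2 t * q2 t)) (at t)"
proof -
  have "(P has_real_derivative (2*\<gamma> * t powr (2*\<gamma> - 1)) * D t + 
      (2 * (p2 t * p2' t + q2 t * q2' t - p1 t * p1' t - q1 t * q1' t)) * t powr (2*\<gamma>)) (at t)"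
    unfolding P_def[abs_def]
    by (rule DERIV_mult has_real_derivative_powr D_deriv assms)+
  moreover have "(2*\<gamma> * t powr (2*\<gamma> - 1)) * D t + 
      (2 * (p2 t * p2' t + q2 t * q2' t - p1 t * p1' t - q1 t * q1' t)) * t powr (2*\<gamma>)
     = 2 * x * t powr (2*\<gamma>) * (p2 t * p2 t + q2 t * q2 t)"
  proof -
    have w: "t powr (2*\<gamma> - 1) = t powr (2*\<gamma>) / t" using assms by (simp add: powr_diff)
    have "(2*\<gamma> * t powr (2*\<gamma> - 1)) * D t + 
      (2 * (p2 t * p2' t + q2 t * q2' t - p1 t * p1' t - q1 t * q1' t)) * t powr (2*\<gamma>)
      = t powr (2*\<gamma>) / t * (2*\<gamma> * D t + t * (2 * (p2 t * p2' t + q2 t * q2' t - p1 t * p1' t - q1 t * q1' t)))"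
      unfolding w using assms by (simp add: field_simps)
    also have "\<dots> = 2 * x * t powr (2*\<gamma>) * (p2 t * p2 t + q2 t * q2 t)"
      unfolding tD using assms by (simp add: field_simps)
    finally show ?thesis .
  qed
  ultimately show ?thesis by simp
qed

lemma P_lim: "(P \<longlongrightarrow> 0) (at_right 0)"
  unfolding P_def[abs_def]
  by (rule powr_lim[OF _ D_deriv]) (use gam i1 i2 i3 i4 in \<open>auto simp: D_def\<close>)

lemma ev_p2: "eventually (\<lambda>t. t > 0 \<and> p2 t > 0) (at_right 0)"
proof -
  have "isCont p2 0" using dp2 by (rule DERIV_isCont)
  then have "(p2 \<longlongrightarrow> 1) (at_right 0)" using i3
    by (metis isCont_def tendsto_mono at_within_le_at)
  then have "eventually (\<lambda>t. p2 t > 0) (at_right 0)"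
    by (rule order_tendstoD) simp
  with eventually_at_right_less[of 0] show ?thesis by eventually_elim auto
qed

lemma D1_pos: "x > 0 \<Longrightarrow> D 1 > 0"
proof -
  assume x: "x > 0"
  have "P 1 > 0"
  proof (rule pos_from_deriv[OF P_lim P_deriv])
    fix t :: real assume "0 < t" "t \<le> 1"
    show "0 \<le> 2 * x * t powr (2*\<gamma>) * (p2 t * p2 t + q2 t * q2 t)"
      using x by (intro mult_nonneg_nonneg) auto
  next
    show "eventually (\<lambda>t. 2 * x * t powr (2*\<gamma>) * (p2 t * p2 t + q2 t * q2 t) > 0) (at_right 0)"
      using ev_p2 by eventually_elim (use x in \<open>auto intro!: mult_pos_pos add_pos_nonneg simp: powr_gt_zero\<close>)
  qed auto
  then show ?thesis by (simp add: P_def)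
qed

lemma D1_neg: "x < 0 \<Longrightarrow> D 1 < 0"
proof -
  assume x: "x < 0"
  have "(\<lambda>t. - P t) 1 > 0"
  proof (rule pos_from_deriv[where Q'="\<lambda>t. - (2 * x * t powr (2*\<gamma>) * (p2 t * p2 t + q2 t * q2 t))"])
    show "((\<lambda>t. - P t) \<longlongrightarrow> 0) (at_right 0)" using tendsto_minus[OF P_lim] by simp
    fix t :: real assume "0 < t" "t \<le> 1"
    then show "((\<lambda>t. - P t) has_real_derivative - (2 * x * t powr (2*\<gamma>) * (p2 t * p2 t + q2 t * q2 t))) (at t)"
      by (intro DERIV_minus P_deriv)
    show "0 \<le> - (2 * x * t powr (2*\<gamma>) * (p2 t * p2 t + q2 t * q2 t))"
      using x by (simp add: mult_nonpos_nonneg mult_neg_pos)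
  next
    show "eventually (\<lambda>t. - (2 * x * t powr (2*\<gamma>) * (p2 t * p2 t + q2 t * q2 t)) > 0) (at_right 0)"
      using ev_p2 by eventually_elim (use x in \<open>auto intro!: mult_neg_pos mult_pos_pos add_pos_nonneg simp: powr_gt_zero\<close>)
  qed
  then show ?thesis by (simp add: P_def)
qed

lemma D1_zero: "x = 0 \<Longrightarrow> D 1 = 0"
proof -
  assume x: "x = 0"
  have "P 1 \<ge> 0"
    using P_deriv by (intro nonneg_from_deriv[OF P_lim, where Q'="\<lambda>t. 2 * x * t powr (2*\<gamma>) * (p2 t * p2 t + q2 t * q2 t)"])
       (auto simp: x)
  moreover have "(\<lambda>t. - P t) 1 \<ge> 0"
  proof (rule nonneg_from_deriv[where Q="\<lambda>t. - P t" and x=1 and Q'="\<lambda>t. - (2 * x * t powr (2*\<gamma>) * (p2 t * p2 t + q2 t * q2 t))"])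
    show "((\<lambda>t. - P t) \<longlongrightarrow> 0) (at_right 0)" using tendsto_minus[OF P_lim] by simp
    fix t :: real assume "0 < t" "t \<le> 1"
    then show "((\<lambda>t. - P t) has_real_derivative - (2 * x * t powr (2*\<gamma>) * (p2 t * p2 t + q2 t * q2 t))) (at t)"
      by (intro DERIV_minus P_deriv)
  qed (auto simp: x)
  ultimately show ?thesis by (simp add: P_def)
qed

definition "S t = t * (p2 t * p2 t + q2 t * q2 t) + (2*\<gamma>/y) * (p2 t * q1 t - q2 t * p1 t)"
definition "K t = t powr (2*\<gamma>) * S t"

definition "S' t = (p2 t * p2 t + q2 t * q2 t) + t * (2 * (p2 t * p2' t + q2 t * q2' t))
   + (2*\<gamma>/y) * (p2' t * q1 t + p2 t * q1' t - (q2' t * p1 t + q2 t * p1' t))"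

lemma S_deriv: "(S has_real_derivative S' t) (at t)"
  unfolding S_def[abs_def] S'_def
  by (rule derivative_eq_intros dp1 dq1 dp2 dq2 refl)+ (simp add: algebra_simps)

lemma tS:
  assumes "x = 0" "y \<noteq> 0"
  shows "2*\<gamma> * S t + t * S' t = t * (p2 t * p2 t + q2 t * q2 t)"
proof -
  have "t * S' t = t * (p2 t * p2 t + q2 t * q2 t) + 2 * t * (p2 t * (t * p2' t) + q2 t * (t * q2' t))
     + (2*\<gamma>/y) * (q1 t * (t * p2' t) + p2 t * (t * q1' t) - (p1 t * (t * q2' t) + q2 t * (t * p1' t)))"
    unfolding S'_def by (simp add: algebra_simps)
  also have "\<dots> = t * (p2 t * p2 t + q2 t * q2 t) + 2 * t * (p2 t * (\<gamma> * (p1 t - p2 t) + t * (x * p2 t - y * q2 t)) + q2 t * (\<gamma> * (q1 t - q2 t) + t * (x * q2 t + y * p2 t)))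
     + (2*\<gamma>/y) * (q1 t * (\<gamma> * (p1 t - p2 t) + t * (x * p2 t - y * q2 t)) + p2 t * (\<gamma> * (q2 t - q1 t)) - (p1 t * (\<gamma> * (q1 t - q2 t) + t * (x * q2 t + y * p2 t)) + q2 t * (\<gamma> * (p2 t - p1 t))))"
    by (simp only: o1 o2 o3 o4)
  finally show ?thesis unfolding S_def using assms by (simp add: field_simps)
qed

lemma K_deriv:
  assumes "t > 0" "x = 0" "y \<noteq> 0"
  shows "(K has_real_derivative t powr (2*\<gamma>) * (p2 t * p2 t + q2 t * q2 t)) (at t)"
proof -
  have "(K has_real_derivative (2*\<gamma> * t powr (2*\<gamma> - 1)) * S t + S' t * t powr (2*\<gamma>)) (at t)"
    unfolding K_def[abs_def]
    by (rule DERIV_mult has_real_derivative_powr S_deriv assms)+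
  moreover have "(2*\<gamma> * t powr (2*\<gamma> - 1)) * S t + S' t * t powr (2*\<gamma>)
     = t powr (2*\<gamma>) * (p2 t * p2 t + q2 t * q2 t)"
  proof -
    have w: "t powr (2*\<gamma> - 1) = t powr (2*\<gamma>) / t" using assms by (simp add: powr_diff)
    have "(2*\<gamma> * t powr (2*\<gamma> - 1)) * S t + S' t * t powr (2*\<gamma>)
      = t powr (2*\<gamma>) / t * (2*\<gamma> * S t + t * S' t)"
      unfolding w using assms by (simp add: field_simps)
    also have "\<dots> = t powr (2*\<gamma>) * (p2 t * p2 t + q2 t * q2 t)"
      unfolding tS[OF assms(2,3)] using assms by (simp add: field_simps)
    finally show ?thesis .
  qed
  ultimately show ?thesis by simp
qed

lemma K_lim: "(K \<longlongrightarrow> 0) (at_right 0)"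
  unfolding K_def[abs_def]
  by (rule powr_lim[OF _ S_deriv]) (use gam i1 i2 i3 i4 in \<open>auto simp: S_def\<close>)

lemma S1_pos: "x = 0 \<Longrightarrow> y \<noteq> 0 \<Longrightarrow> S 1 > 0"
proof -
  assume x: "x = 0" and y: "y \<noteq> 0"
  have "K 1 > 0"
  proof (rule pos_from_deriv[OF K_lim, where Q'="\<lambda>t. t powr (2*\<gamma>) * (p2 t * p2 t + q2 t * q2 t)"])
    fix t :: real assume "0 < t" "t \<le> 1"
    then show "(K has_real_derivative t powr (2*\<gamma>) * (p2 t * p2 t + q2 t * q2 t)) (at t)"
      using K_deriv x y by auto
    show "0 \<le> t powr (2*\<gamma>) * (p2 t * p2 t + q2 t * q2 t)"
      by (intro mult_nonneg_nonneg) auto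
  next
    show "eventually (\<lambda>t. t powr (2*\<gamma>) * (p2 t * p2 t + q2 t * q2 t) > 0) (at_right 0)"
      using ev_p2 by eventually_elim (auto intro!: mult_pos_pos add_pos_nonneg simp: powr_gt_zero)
  qed
  then show ?thesis by (simp add: K_def)
qed

end



lemma ray_inst:
  fixes \<gamma> :: real and z :: complex
  assumes gam: "\<gamma> > -1/2"
  defines "F \<equiv> hyp1F1 (of_real \<gamma>) (of_real (2*\<gamma>+1))"
    and "G \<equiv> hyp1F1 (of_real \<gamma> + 1) (of_real (2*\<gamma>+1))"
  shows "ray (\<lambda>t. Re (F (of_real t * z))) (\<lambda>t. Im (F (of_real t * z)))
             (\<lambda>t. Re (G (of_real t * z))) (\<lambda>t. Im (G (of_real t * z)))
             (\<lambda>t. Re (z * (of_real \<gamma> / of_real (2*\<gamma>+1) * hyp1F1 (of_real \<gamma>+1) (of_real (2*\<gamma>+1) + 1) (of_real t * z))))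
             (\<lambda>t. Im (z * (of_real \<gamma> / of_real (2*\<gamma>+1) * hyp1F1 (of_real \<gamma>+1) (of_real (2*\<gamma>+1) + 1) (of_real t * z))))
             (\<lambda>t. Re (z * ((of_real \<gamma>+1) / of_real (2*\<gamma>+1) * hyp1F1 (of_real \<gamma>+1+1) (of_real (2*\<gamma>+1) + 1) (of_real t * z))))
             (\<lambda>t. Im (z * ((of_real \<gamma>+1) / of_real (2*\<gamma>+1) * hyp1F1 (of_real \<gamma>+1+1) (of_real (2*\<gamma>+1) + 1) (of_real t * z))))
             \<gamma> (Re z) (Im z)"
proof -
  have b: "2*\<gamma>+1 > 0" using gam by simp
  define dF where "dF w = of_real \<gamma> / of_real (2*\<gamma>+1) * hyp1F1 (of_real \<gamma>+1) (of_real (2*\<gamma>+1) + 1) w" for w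
  define dG where "dG w = (of_real \<gamma>+1) / of_real (2*\<gamma>+1) * hyp1F1 (of_real \<gamma>+1+1) (of_real (2*\<gamma>+1) + 1) w" for w
  have hF: "(F has_field_derivative dF w) (at w)" for w
    unfolding F_def dF_def by (rule hyp_deriv[OF b])
  have hG: "(G has_field_derivative dG w) (at w)" for w
    unfolding G_def dG_def by (rule hyp_deriv[OF b])
  have vF: "((\<lambda>t. F (of_real t * z)) has_vector_derivative z * dF (of_real t * z)) (at t)" for t
  proof -
    have "((\<lambda>w. F (w * z)) has_field_derivative dF (of_real t * z) * z) (at (of_real t))"
      using DERIV_chain2[OF hF DERIV_cmult_right[OF DERIV_ident, of z]] by simp
    from has_vector_derivative_real_field[OF this] show ?thesis by (simp add: mult.commute)
  qed
  have vG: "((\<lambda>t. G (of_real t * z)) has_vector_derivative z * dG (of_real t * z)) (at t)" for t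
  proof -
    have "((\<lambda>w. G (w * z)) has_field_derivative dG (of_real t * z) * z) (at (of_real t))"
      using DERIV_chain2[OF hG DERIV_cmult_right[OF DERIV_ident, of z]] by simp
    from has_vector_derivative_real_field[OF this] show ?thesis by (simp add: mult.commute)
  qed
  have e1: "of_real t * (z * dF (of_real t * z)) = of_real \<gamma> * (G (of_real t * z) - F (of_real t * z))" for t
    using E1[OF b, of "of_real t * z" "of_real \<gamma>"] unfolding dF_def F_def G_def by (simp add: mult.assoc)
  have e2: "of_real t * (z * dG (of_real t * z)) = of_real \<gamma> * (F (of_real t * z) - G (of_real t * z)) + of_real t * z * G (of_real t * z)" for t
    using E2[OF b, of "of_real \<gamma>" "of_real t * z"] unfolding dG_def F_def G_def by (simp add: mult.assoc)
  show ?thesis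
    unfolding dF_def[symmetric] dG_def[symmetric]
  proof
    show "((\<lambda>t. Re (F (of_real t * z))) has_real_derivative Re (z * dF (of_real t * z))) (at t)" for t
      by (rule has_field_derivative_Re[OF vF])
    show "((\<lambda>t. Im (F (of_real t * z))) has_real_derivative Im (z * dF (of_real t * z))) (at t)" for t
      by (rule has_field_derivative_Im[OF vF])
    show "((\<lambda>t. Re (G (of_real t * z))) has_real_derivative Re (z * dG (of_real t * z))) (at t)" for t
      by (rule has_field_derivative_Re[OF vG])
    show "((\<lambda>t. Im (G (of_real t * z))) has_real_derivative Im (z * dG (of_real t * z))) (at t)" for t
      by (rule has_field_derivative_Im[OF vG])
    show "t * Re (z * dF (of_real t * z)) = \<gamma> * (Re (G (of_real t * z)) - Re (F (of_real t * z)))" for t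
      using arg_cong[OF e1[of t], of Re] by simp
    show "t * Im (z * dF (of_real t * z)) = \<gamma> * (Im (G (of_real t * z)) - Im (F (of_real t * z)))" for t
      using arg_cong[OF e1[of t], of Im] by simp
    show "t * Re (z * dG (of_real t * z)) = \<gamma> * (Re (F (of_real t * z)) - Re (G (of_real t * z))) + t * (Re z * Re (G (of_real t * z)) - Im z * Im (G (of_real t * z)))" for t
      using arg_cong[OF e2[of t], of Re] by (simp add: algebra_simps)
    show "t * Im (z * dG (of_real t * z)) = \<gamma> * (Im (F (of_real t * z)) - Im (G (of_real t * z))) + t * (Re z * Im (G (of_real t * z)) + Im z * Re (G (of_real t * z)))" for t
      using arg_cong[OF e2[of t], of Im] by (simp add: algebra_simps)
  qed (use gam in \<open>auto simp: F_def G_def hyp_zero\<close>)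
qed

lemma ray_ex:
  fixes \<gamma> :: real and z :: complex
  assumes gam: "\<gamma> > -1/2"
  shows "\<exists>u1 v1 u2 v2. ray (\<lambda>t. Re (hyp1F1 (of_real \<gamma>) (of_real (2*\<gamma>+1)) (of_real t * z))) (\<lambda>t. Im (hyp1F1 (of_real \<gamma>) (of_real (2*\<gamma>+1)) (of_real t * z)))
             (\<lambda>t. Re (hyp1F1 (of_real \<gamma> + 1) (of_real (2*\<gamma>+1)) (of_real t * z))) (\<lambda>t. Im (hyp1F1 (of_real \<gamma> + 1) (of_real (2*\<gamma>+1)) (of_real t * z)))
             u1 v1 u2 v2 \<gamma> (Re z) (Im z)"
  using ray_inst[OF gam, of z] by blast

lemma part1:
  fixes \<gamma> :: real and a :: complex
  assumes gam: "\<gamma> > -1/2" and ia: "Im a \<noteq> 0"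
  shows "(2 * \<gamma> + 1) *
              ((cmod (hyp1F1 (of_real \<gamma>) (2 * of_real \<gamma> + 1) (\<i> * a)))\<^sup>2
               - (cmod (hyp1F1 (1 + of_real \<gamma>) (2 * of_real \<gamma> + 1) (\<i> * a)))\<^sup>2)
              / (2 * Im a) > 0"
proof -
  define z where "z = \<i> * a"
  obtain u1 v1 u2 v2 where RR: "ray (\<lambda>t. Re (hyp1F1 (of_real \<gamma>) (of_real (2*\<gamma>+1)) (of_real t * z))) (\<lambda>t. Im (hyp1F1 (of_real \<gamma>) (of_real (2*\<gamma>+1)) (of_real t * z)))
             (\<lambda>t. Re (hyp1F1 (of_real \<gamma> + 1) (of_real (2*\<gamma>+1)) (of_real t * z))) (\<lambda>t. Im (hyp1F1 (of_real \<gamma> + 1) (of_real (2*\<gamma>+1)) (of_real t * z)))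
             u1 v1 u2 v2 \<gamma> (Re z) (Im z)"
    using ray_ex[OF gam, of z] by blast
  interpret R: ray "\<lambda>t. Re (hyp1F1 (of_real \<gamma>) (of_real (2*\<gamma>+1)) (of_real t * z))" "\<lambda>t. Im (hyp1F1 (of_real \<gamma>) (of_real (2*\<gamma>+1)) (of_real t * z))"
             "\<lambda>t. Re (hyp1F1 (of_real \<gamma> + 1) (of_real (2*\<gamma>+1)) (of_real t * z))" "\<lambda>t. Im (hyp1F1 (of_real \<gamma> + 1) (of_real (2*\<gamma>+1)) (of_real t * z))"
             u1 v1 u2 v2 \<gamma> "Re z" "Im z"
    by (rule RR)
  have r: "(2::complex) * of_real \<gamma> + 1 = of_real (2*\<gamma>+1)" by simp
  have r2: "1 + (of_real \<gamma>::complex) = of_real \<gamma> + 1" by simp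
  have b: "2*\<gamma>+1 > 0" using gam by simp
  have Rz: "Re z = - Im a" unfolding z_def by simp
  let ?F = "hyp1F1 (of_real \<gamma>) (of_real (2*\<gamma>+1)) z" and ?G = "hyp1F1 (of_real \<gamma> + 1) (of_real (2*\<gamma>+1)) z"
  have D1: "R.D 1 = (cmod ?G)\<^sup>2 - (cmod ?F)\<^sup>2"
    unfolding R.D_def cmod_power2 by (simp add: power2_eq_square)
  have goal: "(2 * \<gamma> + 1) * ((cmod ?F)\<^sup>2 - (cmod ?G)\<^sup>2) / (2 * Im a) > 0"
  proof (cases "Im a > 0")
    case True
    then have "R.D 1 < 0" using R.D1_neg Rz by simp
    then show ?thesis using True b unfolding D1 by (intro divide_pos_pos mult_pos_pos) auto
  next
    case False
    then have "Im a < 0" using ia by simp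
    then have "R.D 1 > 0" using R.D1_pos Rz by simp
    then show ?thesis using \<open>Im a < 0\<close> b unfolding D1 by (intro divide_neg_neg mult_pos_neg) auto
  qed
  then show ?thesis unfolding r r2 z_def .
qed

lemma part2:
  fixes \<gamma> a :: real
  assumes gam: "\<gamma> > -1/2"
  shows "Im (T_fun \<gamma> a) = 0 \<and> Re (T_fun \<gamma> a) > 0"
proof (cases "a = 0")
  case True
  then have "T_fun \<gamma> a = 1" unfolding T_fun_def by (simp add: hyp_zero)
  then show ?thesis by simp
next
  case False
  define z where "z = \<i> * of_real a"
  obtain u1 v1 u2 v2 where RR: "ray (\<lambda>t. Re (hyp1F1 (of_real \<gamma>) (of_real (2*\<gamma>+1)) (of_real t * z))) (\<lambda>t. Im (hyp1F1 (of_real \<gamma>) (of_real (2*\<gamma>+1)) (of_real t * z)))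
             (\<lambda>t. Re (hyp1F1 (of_real \<gamma> + 1) (of_real (2*\<gamma>+1)) (of_real t * z))) (\<lambda>t. Im (hyp1F1 (of_real \<gamma> + 1) (of_real (2*\<gamma>+1)) (of_real t * z)))
             u1 v1 u2 v2 \<gamma> (Re z) (Im z)"
    using ray_ex[OF gam, of z] by blast
  interpret R: ray "\<lambda>t. Re (hyp1F1 (of_real \<gamma>) (of_real (2*\<gamma>+1)) (of_real t * z))" "\<lambda>t. Im (hyp1F1 (of_real \<gamma>) (of_real (2*\<gamma>+1)) (of_real t * z))"
             "\<lambda>t. Re (hyp1F1 (of_real \<gamma> + 1) (of_real (2*\<gamma>+1)) (of_real t * z))" "\<lambda>t. Im (hyp1F1 (of_real \<gamma> + 1) (of_real (2*\<gamma>+1)) (of_real t * z))"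
             u1 v1 u2 v2 \<gamma> "Re z" "Im z"
    by (rule RR)
  have b: "2*\<gamma>+1 > 0" using gam by simp
  have Rz: "Re z = 0" and Iz: "Im z = a" unfolding z_def by simp_all
  have zn: "z \<noteq> 0" using False unfolding z_def by simp
  define FZ where "FZ = hyp1F1 (of_real \<gamma>) (of_real (2*\<gamma>+1)) z"
  define GZ where "GZ = hyp1F1 (of_real \<gamma> + 1) (of_real (2*\<gamma>+1)) z"
  define A where "A = hyp1F1 (of_real \<gamma>+1+1) (of_real (2*\<gamma>+1) + 1) z"
  define B where "B = hyp1F1 (of_real \<gamma>+1) (of_real (2*\<gamma>+1) + 1) z"
  have D0: "R.D 1 = 0" using R.D1_zero Rz by simp
  then have D0': "Re GZ * Re GZ + Im GZ * Im GZ = Re FZ * Re FZ + Im FZ * Im FZ"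
    unfolding R.D_def FZ_def GZ_def by simp
  have S1: "R.S 1 > 0" using R.S1_pos Rz Iz False by simp
  define s where "s = Re GZ * Re GZ + Im GZ * Im GZ + (2*\<gamma>/a) * (Re GZ * Im FZ - Im GZ * Re FZ)"
  have s_eq: "R.S 1 = s" unfolding R.S_def s_def FZ_def GZ_def by (simp add: Iz)
  have cG: "hyp1F1 (1 + of_real \<gamma>) (2 * of_real \<gamma> + 1) (- \<i> * of_real a) = cnj GZ"
    using hyp_cnj[OF b, of "\<gamma>+1" z] unfolding GZ_def z_def by (simp add: add.commute)
  have cF: "hyp1F1 (of_real \<gamma>) (2 * of_real \<gamma> + 1) (- \<i> * of_real a) = cnj FZ"
    using hyp_cnj[OF b, of "\<gamma>" z] unfolding FZ_def z_def by simp
  have eA: "hyp1F1 (2 + of_real \<gamma>) (2 * of_real \<gamma> + 2) (\<i> * of_real a) = A"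
    unfolding A_def z_def by (rule arg_cong2[where f="\<lambda>u v. hyp1F1 u v _"]) simp_all
  have eB: "hyp1F1 (1 + of_real \<gamma>) (2 * of_real \<gamma> + 2) (\<i> * of_real a) = B"
    unfolding B_def z_def by (rule arg_cong2[where f="\<lambda>u v. hyp1F1 u v _"]) simp_all
  have T: "T_fun \<gamma> a = cnj GZ * A * (1 + of_real \<gamma>) - cnj FZ * B * of_real \<gamma>"
    unfolding T_fun_def cG cF eA eB ..
  have Bc: "(of_real (2*\<gamma>+1) :: complex) \<noteq> 0" using b by (metis of_real_eq_0_iff order_less_irrefl)
  have e1: "z * (of_real \<gamma> / of_real (2*\<gamma>+1) * B) = of_real \<gamma> * (GZ - FZ)"
    unfolding B_def GZ_def FZ_def by (rule E1[OF b])
  have e2: "z * ((of_real \<gamma>+1) / of_real (2*\<gamma>+1) * A) = of_real \<gamma> * (FZ - GZ) + z * GZ"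
    unfolding A_def GZ_def FZ_def by (rule E2[OF b]) simp
  have e1': "of_real \<gamma> * (z * B) = of_real (2*\<gamma>+1) * (of_real \<gamma> * (GZ - FZ))"
    using e1 Bc by (simp add: field_simps)
  have e2': "(1 + of_real \<gamma>) * (z * A) = of_real (2*\<gamma>+1) * (of_real \<gamma> * (FZ - GZ) + z * GZ)"
    using e2 Bc by (simp add: field_simps)
  have zT: "z * T_fun \<gamma> a = cnj GZ * (of_real (2*\<gamma>+1) * (of_real \<gamma> * (FZ - GZ) + z * GZ))
       - cnj FZ * (of_real (2*\<gamma>+1) * (of_real \<gamma> * (GZ - FZ)))"
    unfolding T e1'[symmetric] e2'[symmetric] by (simp add: algebra_simps)
  have "z * T_fun \<gamma> a = z * of_real ((2*\<gamma>+1) * s)"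
    unfolding zT
    using D0' False unfolding s_def z_def
    by (simp add: complex_eq_iff algebra_simps) (simp add: field_simps, (intro conjI; algebra))
  then have "T_fun \<gamma> a = of_real ((2*\<gamma>+1) * s)" using zn by simp
  moreover have "s > 0" using S1 s_eq by simp
  ultimately show ?thesis using b by simp
qed


theorem lemma2p4:
  fixes \<gamma> :: real
  assumes "\<gamma> > - 1 / 2"
  shows "(\<forall>a :: complex. Im a \<noteq> 0 \<longrightarrow>
            (2 * \<gamma> + 1) *
              ((cmod (hyp1F1 (of_real \<gamma>) (2 * of_real \<gamma> + 1) (\<i> * a)))\<^sup>2
               - (cmod (hyp1F1 (1 + of_real \<gamma>) (2 * of_real \<gamma> + 1) (\<i> * a)))\<^sup>2)
              / (2 * Im a) > 0)
       \<and> (\<forall>a :: real. Im (T_fun \<gamma> a) = 0 \<and> Re (T_fun \<gamma> a) > 0)"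
  using part1[of \<gamma>] part2[of \<gamma>] assms by auto

end
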